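(* Let $Q\in\mathbb{R}^{n\times n}$ be symmetric positive definite, $\mathcal{E}=\{x: x^TQx\le1\}$, $\partial\mathcal{E}=\{x:x^TQx=1\}$, and $A\in\mathbb{R}^{n\times n}$. Then for every $x_0\in\partial\mathcal{E}$ the solution $x(t)=e^{At}x_0$ of $\dot x=Ax$ satisfies $x(t)\in\partial\mathcal{E}$ for all $t\ge0$ if and only if $$\sum_{i=0}^{k-1}\frac{1}{(k-1)!}\binom{k-1}{i}(A^i)^TQA^{k-i-1}=0\quad\text{for all }k=2,3,\dots$$ *)

theory Defs
  imports "HOL-Analysis.Analysis"
begin

fun matpow :: "real^'n^'n \<Rightarrow> nat \<Rightarrow> real^'n^'n" where
  "matpow A 0 = mat 1"
| "matpow A (Suc k) = A ** matpow A k"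

definition mexp :: "real \<Rightarrow> real^'n^'n \<Rightarrow> real^'n^'n" where
  "mexp t A = (\<Sum>k. (t ^ k / fact k) *\<^sub>R matpow A k)"

definition symmetric_matrix :: "real^'n^'n \<Rightarrow> bool" where
  "symmetric_matrix Q \<longleftrightarrow> transpose Q = Q"

definition positive_definite :: "real^'n^'n \<Rightarrow> bool" where
  "positive_definite Q \<longleftrightarrow> (\<forall>x. x \<noteq> 0 \<longrightarrow> x \<bullet> (Q *v x) > 0)"

definition ellipsoid_boundary :: "real^'n^'n \<Rightarrow> (real^'n) set" where
  "ellipsoid_boundary Q = {x. x \<bullet> (Q *v x) = 1}"

end

theory Submission imports Defs begin

lemma mm_scaleR_left: "((c::real) *\<^sub>R (X::real^'n^'m)) ** (Y::real^'p^'n) = c *\<^sub>R (X ** Y)"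
  by (simp add: vec_eq_iff matrix_matrix_mult_def sum_distrib_left mult.assoc)

lemma mm_scaleR_right: "(X::real^'n^'m) ** ((c::real) *\<^sub>R (Y::real^'p^'n)) = c *\<^sub>R (X ** Y)"
  by (simp add: vec_eq_iff matrix_matrix_mult_def sum_distrib_left mult.left_commute)

lemma mm_neg_left: "(- (X::real^'n^'m)) ** (Y::real^'p^'n) = - (X ** Y)"
  using mm_scaleR_left[of "-1" X Y] by simp

lemma matpow_add: "matpow A (a + b) = matpow A a ** matpow A b"
  by (induction a) (auto simp: matrix_mul_assoc)

lemma matpow_Suc': "matpow A (Suc k) = matpow A k ** A"
  using matpow_add[of A k 1] by simp

lemma transpose_matpow: "transpose (matpow A i) = matpow (transpose A) i"
proof (induction i)
  case (Suc i)
  have "transpose (matpow A (Suc i)) = transpose (matpow A i ** A)" by (simp only: matpow_Suc')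
  also have "\<dots> = transpose A ** matpow (transpose A) i" by (simp add: matrix_transpose_mul Suc)
  finally show ?case by simp
qed simp

lemma Q_matpow:
  assumes "Q ** A = - (transpose A ** Q)"
  shows "Q ** matpow A j = (-1)^j *\<^sub>R (matpow (transpose A) j ** Q)"
proof (induction j)
  case 0 then show ?case by simp
next
  case (Suc j)
  have "Q ** matpow A (Suc j) = (Q ** A) ** matpow A j" by (simp add: matrix_mul_assoc)
  also have "\<dots> = - (transpose A ** (Q ** matpow A j))"
    by (simp only: assms mm_neg_left matrix_mul_assoc)
  also have "\<dots> = - (transpose A ** ((-1)^j *\<^sub>R (matpow (transpose A) j ** Q)))"
    by (simp only: Suc)
  also have "\<dots> = (-1)^Suc j *\<^sub>R (matpow (transpose A) (Suc j) ** Q)"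
    by (simp only: mm_scaleR_right matrix_mul_assoc matpow.simps power_Suc scaleR_scaleR[symmetric] scaleR_minus1_left)
  finally show ?case .
qed

lemma T_term:
  assumes "Q ** A = - (transpose A ** Q)" and "i \<le> m"
  shows "transpose (matpow A i) ** Q ** matpow A (m-i) = (-1)^(m-i) *\<^sub>R (matpow (transpose A) m ** Q)"
proof -
  have e: "matpow (transpose A) i ** matpow (transpose A) (m-i) = matpow (transpose A) m"
    using assms(2) by (simp flip: matpow_add)
  have "transpose (matpow A i) ** Q ** matpow A (m-i) = matpow (transpose A) i ** (Q ** matpow A (m-i))"
    by (simp add: transpose_matpow matrix_mul_assoc)
  also have "\<dots> = matpow (transpose A) i ** ((-1)^(m-i) *\<^sub>R (matpow (transpose A) (m-i) ** Q))"
    by (simp only: Q_matpow[OF assms(1)])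
  also have "\<dots> = (-1)^(m-i) *\<^sub>R ((matpow (transpose A) i ** matpow (transpose A) (m-i)) ** Q)"
    by (simp only: mm_scaleR_right matrix_mul_assoc)
  finally show ?thesis by (simp only: e)
qed

lemma alt_sum: "m > 0 \<Longrightarrow> (\<Sum>i=0..m. real (m choose i) * (-1)^(m-i)) = 0"
proof -
  assume m: "m > 0"
  have "(\<Sum>i=0..m. real (m choose i) * (-1)^(m-i)) = (-1)^m * (\<Sum>i\<le>m. (-1)^i * real (m choose i))"
    unfolding sum_distrib_left atLeast0AtMost
  proof (rule sum.cong[OF refl])
    fix i assume "i \<in> {..m}"
    then have mi: "m = (m-i)+i" by simp
    have h: "(-1::real)^m = (-1)^(m-i) * (-1)^i" by (subst mi) (simp only: power_add)
    have ii: "(-1::real)^i * (-1)^i = 1" by (simp flip: power_mult_distrib)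
    have "(-1::real)^m * (-1)^i = (-1)^(m-i)"
      unfolding h mult.assoc ii by simp
    then show "real (m choose i) * (-1) ^ (m - i) = (-1) ^ m * ((-1) ^ i * real (m choose i))"
      by (metis mult.assoc mult.commute)
  qed
  also have "\<dots> = 0" using choose_alternating_sum[OF m] by simp
  finally show ?thesis .
qed

lemma T_zero:
  assumes "Q ** A = - (transpose A ** Q)" and "m > 0"
  shows "(\<Sum>i=0..m. real (m choose i) *\<^sub>R (transpose (matpow A i) ** Q ** matpow A (m-i))) = 0"
proof -
  have "(\<Sum>i=0..m. real (m choose i) *\<^sub>R (transpose (matpow A i) ** Q ** matpow A (m-i)))
     = (\<Sum>i=0..m. (real (m choose i) * (-1)^(m-i)) *\<^sub>R (matpow (transpose A) m ** Q))"
    by (rule sum.cong[OF refl]) (simp add: T_term[OF assms(1)])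
  also have "\<dots> = (\<Sum>i=0..m. real (m choose i) * (-1)^(m-i)) *\<^sub>R (matpow (transpose A) m ** Q)"
    by (simp only: scaleR_sum_left)
  also have "\<dots> = 0" by (simp only: alt_sum[OF assms(2)] scaleR_zero_left)
  finally show ?thesis .
qed


lemma matpow_bound:
  fixes A :: "real^'n^'n"
  obtains B :: real where "B > 0" "\<And>k v. norm (matpow A k *v v) \<le> B^k * norm v"
proof -
  have "bounded_linear (\<lambda>v::real^'n. A *v v)"
    by (simp add: linear_conv_bounded_linear)
  then obtain K where K: "K > 0" "\<And>v. norm (A *v v) \<le> norm v * K"
    using bounded_linear.pos_bounded by blast
  have "norm (matpow A k *v v) \<le> K^k * norm v" for k v
  proof (induction k)
    case 0 then show ?case by simp
  next
    case (Suc k)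
    have "norm (matpow A (Suc k) *v v) = norm (A *v (matpow A k *v v))"
      by (simp add: matrix_vector_mul_assoc)
    also have "\<dots> \<le> norm (matpow A k *v v) * K" by (rule K(2))
    also have "\<dots> \<le> K^k * norm v * K" using Suc K(1) by (simp add: mult_right_mono)
    finally show ?case by (simp add: algebra_simps)
  qed
  then show ?thesis using K(1) that by blast
qed

lemma summable_vec_comp:
  fixes f :: "nat \<Rightarrow> 'a::real_normed_vector ^ 'm"
  assumes "\<And>i. summable (\<lambda>k. f k $ i)"
  shows "summable f"
proof -
  have "f sums (\<chi> i. suminf (\<lambda>k. f k $ i))"
    unfolding sums_def
    by (rule vec_tendstoI) (simp add: summable_LIMSEQ assms)
  then show ?thesis by (rule sums_summable)
qed

lemma summable_vec:
  fixes A :: "real^'n^'n"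
  shows "summable (\<lambda>k. (t^k / fact k) *\<^sub>R (matpow A k *v v))"
proof -
  obtain B where B: "B > 0" "\<And>k v. norm (matpow A k *v v) \<le> B^k * norm v"
    using matpow_bound by blast
  have s: "summable (\<lambda>k. norm v * (inverse (fact k) * (\<bar>t\<bar> * B)^k))"
    by (intro summable_mult summable_exp)
  show ?thesis
  proof (rule summable_comparison_test'[OF s])
    fix k :: nat
    have "norm ((t^k / fact k) *\<^sub>R (matpow A k *v v)) = \<bar>t\<bar>^k / fact k * norm (matpow A k *v v)"
      by (simp add: power_abs)
    also have "\<dots> \<le> \<bar>t\<bar>^k / fact k * (B^k * norm v)"
      by (intro mult_left_mono B(2)) auto
    also have "\<dots> = norm v * (inverse (fact k) * (\<bar>t\<bar> * B)^k)"
      by (simp add: power_mult_distrib field_simps)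
    finally show "norm ((t^k / fact k) *\<^sub>R (matpow A k *v v)) \<le> norm v * (inverse (fact k) * (\<bar>t\<bar> * B)^k)" .
  qed
qed

lemma matpow_entry: "matpow A k $ i $ j = (matpow A k *v axis j 1) $ i"
  by (simp add: matrix_vector_mult_def axis_def if_distrib sum.delta' cong: if_cong)

lemma summable_mat:
  fixes A :: "real^'n^'n"
  shows "summable (\<lambda>k. (t^k / fact k) *\<^sub>R matpow A k)"
proof (rule summable_vec_comp, rule summable_vec_comp)
  fix i j
  have "summable (\<lambda>k. ((t^k / fact k) *\<^sub>R (matpow A k *v axis j 1)) $ i)"
    by (rule bounded_linear.summable[OF bounded_linear_vec_nth summable_vec])
  then show "summable (\<lambda>k. ((t^k / fact k) *\<^sub>R matpow A k) $ i $ j)"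
    by (simp add: matpow_entry)
qed

lemma bounded_linear_mv: "bounded_linear (\<lambda>M::real^'n^'m. M *v v)"
  by (rule linear_conv_bounded_linear[THEN iffD1], rule linearI)
     (simp_all add: matrix_vector_mult_add_rdistrib scaleR_matrix_vector_assoc)

lemma mexp_apply:
  "mexp t A *v v = (\<Sum>k. (t^k / fact k) *\<^sub>R (matpow A k *v v))"
proof -
  have "mexp t A *v v = (\<Sum>k. ((t^k / fact k) *\<^sub>R matpow A k) *v v)"
    unfolding mexp_def by (rule bounded_linear.suminf[OF bounded_linear_mv summable_mat])
  then show ?thesis by (simp add: scaleR_matrix_vector_assoc)
qed


lemma X_component_deriv:
  fixes A :: "real^'n^'n"
  shows "((\<lambda>s. (mexp s A *v x0) $ j) has_field_derivative (A *v (mexp t A *v x0)) $ j) (at t)"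
proof -
  define w where "w k = matpow A k *v x0" for k
  define c where "c n = w n $ j / fact n" for n
  have comp: "(mexp s A *v x0) $ j = (\<Sum>n. c n * s^n)" for s
  proof -
    have "(mexp s A *v x0) $ j = (\<Sum>k. ((s^k / fact k) *\<^sub>R w k) $ j)"
      unfolding mexp_apply w_def
      by (rule bounded_linear.suminf[OF bounded_linear_vec_nth summable_vec])
    also have "\<dots> = (\<Sum>n. c n * s^n)" by (simp add: c_def mult.commute)
    finally show ?thesis .
  qed
  have summ: "summable (\<lambda>n. c n * y^n)" for y
  proof -
    have "summable (\<lambda>k. ((y^k / fact k) *\<^sub>R w k) $ j)"
      unfolding w_def by (rule bounded_linear.summable[OF bounded_linear_vec_nth summable_vec])
    then show ?thesis by (simp add: c_def mult.commute)
  qed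
  have D: "((\<lambda>s. \<Sum>n. c n * s^n) has_field_derivative (\<Sum>n. diffs c n * t^n)) (at t)"
    by (rule termdiffs_strong_converges_everywhere[OF summ])
  have dn: "diffs c n * t^n = ((t^n / fact n) *\<^sub>R (A *v w n)) $ j" for n
  proof -
    have e: "w (Suc n) = A *v w n" by (simp add: w_def matrix_vector_mul_assoc)
    have f: "(fact (Suc n) :: real) = real (Suc n) * fact n" by simp
    have "diffs c n = real (Suc n) * ((A *v w n) $ j / (real (Suc n) * fact n))"
      unfolding diffs_def c_def e f by simp
    also have "\<dots> = (A *v w n) $ j / fact n"
      by (simp del: of_nat_Suc)
    finally show ?thesis by simp

  qed
  have "(\<Sum>n. diffs c n * t^n) = (\<Sum>n. ((t^n / fact n) *\<^sub>R (A *v w n)) $ j)"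
    by (simp only: dn)
  also have "\<dots> = (\<Sum>n. (t^n / fact n) *\<^sub>R (A *v w n)) $ j"
  proof (rule bounded_linear.suminf[OF bounded_linear_vec_nth, symmetric])
    have blA: "bounded_linear (\<lambda>v::real^'n. A *v v)" by (simp add: linear_conv_bounded_linear)
    have "summable (\<lambda>n. A *v ((t^n/fact n) *\<^sub>R (matpow A n *v x0)))"
      by (rule bounded_linear.summable[OF blA summable_vec])
    then show "summable (\<lambda>n. (t^n / fact n) *\<^sub>R (A *v w n))"
      by (simp add: matrix_vector_mult_scaleR w_def)
  qed
  also have "(\<Sum>n. (t^n / fact n) *\<^sub>R (A *v w n)) = A *v (\<Sum>n. (t^n / fact n) *\<^sub>R w n)"
  proof -
    have "A *v (\<Sum>n. (t^n / fact n) *\<^sub>R w n) = (\<Sum>n. A *v ((t^n / fact n) *\<^sub>R w n))"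
      unfolding w_def
      by (rule bounded_linear.suminf[OF _ summable_vec]) (simp add: linear_conv_bounded_linear)
    then show ?thesis by (simp add: matrix_vector_mult_scaleR)
  qed
  also have "(\<Sum>n. (t^n / fact n) *\<^sub>R w n) = mexp t A *v x0"
    by (simp add: mexp_apply w_def)
  finally show ?thesis using D by (simp add: comp)
qed


lemma X_deriv:
  fixes A :: "real^'n^'n"
  shows "((\<lambda>s. mexp s A *v x0) has_derivative (\<lambda>h. h *\<^sub>R (A *v (mexp t A *v x0)))) (at t)"
proof (subst has_derivative_componentwise_within, intro ballI)
  fix i :: "real^'n" assume "i \<in> Basis"
  then obtain k where i: "i = axis k 1" by (auto simp: Basis_vec_def)
  have "((\<lambda>s. (mexp s A *v x0) $ k) has_derivative (\<lambda>h. ((A *v (mexp t A *v x0)) $ k) * h)) (at t)"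
    using X_component_deriv[of A x0 k t] unfolding has_field_derivative_def .
  then show "((\<lambda>s. (mexp s A *v x0) \<bullet> i) has_derivative (\<lambda>h. (h *\<^sub>R (A *v (mexp t A *v x0))) \<bullet> i)) (at t)"
    unfolding i by (simp add: cart_eq_inner_axis[symmetric] mult.commute)
qed

lemma X0: "mexp 0 A *v x0 = x0"
proof -
  have "(\<lambda>k. ((0::real)^k / fact k) *\<^sub>R (matpow A k *v x0)) = (\<lambda>k. if k = 0 then matpow A k *v x0 else 0)"
    by (auto simp: fun_eq_iff)
  moreover have "(\<lambda>k. if k = 0 then matpow A k *v x0 else 0) sums (matpow A 0 *v x0)"
    by (rule sums_single)
  ultimately show ?thesis by (simp add: mexp_apply sums_iff)
qed

lemma dot_transpose: "(x::real^'n) \<bullet> (transpose (M::real^'n^'m) *v y) = (M *v x) \<bullet> y"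
  by (metis dot_lmul_matrix inner_commute transpose_matrix_vector)

lemma g_deriv:
  fixes A Q :: "real^'n^'n"
  shows "((\<lambda>s. (mexp s A *v x0) \<bullet> (Q *v (mexp s A *v x0))) has_real_derivative
     (mexp t A *v x0) \<bullet> ((transpose A ** Q + Q ** A) *v (mexp t A *v x0))) (at t)"
proof -
  define X where "X = mexp t A *v x0"
  have blQ: "bounded_linear (\<lambda>v::real^'n. Q *v v)" by (simp add: linear_conv_bounded_linear)
  have d1: "((\<lambda>s. mexp s A *v x0) has_derivative (\<lambda>h. h *\<^sub>R (A *v X))) (at t)"
    unfolding X_def by (rule X_deriv)
  have d2: "((\<lambda>s. Q *v (mexp s A *v x0)) has_derivative (\<lambda>h. Q *v (h *\<^sub>R (A *v X)))) (at t)"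
    by (rule bounded_linear.has_derivative[OF blQ d1])
  have "((\<lambda>s. (mexp s A *v x0) \<bullet> (Q *v (mexp s A *v x0))) has_derivative
     (\<lambda>h. X \<bullet> (Q *v (h *\<^sub>R (A *v X))) + (h *\<^sub>R (A *v X)) \<bullet> (Q *v X))) (at t)"
    using has_derivative_inner[OF d1 d2] unfolding X_def .
  moreover have "(\<lambda>h. X \<bullet> (Q *v (h *\<^sub>R (A *v X))) + (h *\<^sub>R (A *v X)) \<bullet> (Q *v X))
      = (\<lambda>h. (X \<bullet> ((transpose A ** Q + Q ** A) *v X)) * h)"
  proof
    fix h :: real
    have "(transpose A ** Q + Q ** A) *v X = transpose A *v (Q *v X) + Q *v (A *v X)"
      by (simp add: matrix_vector_mult_add_rdistrib matrix_vector_mul_assoc)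
    then have "X \<bullet> ((transpose A ** Q + Q ** A) *v X) = (A *v X) \<bullet> (Q *v X) + X \<bullet> (Q *v (A *v X))"
      by (simp only: inner_add_right dot_transpose)
    then show "X \<bullet> (Q *v (h *\<^sub>R (A *v X))) + (h *\<^sub>R (A *v X)) \<bullet> (Q *v X)
      = (X \<bullet> ((transpose A ** Q + Q ** A) *v X)) * h"
      by (simp add: matrix_vector_mult_scaleR algebra_simps)
  qed
  ultimately show ?thesis unfolding has_field_derivative_def X_def by simp
qed


lemma k2_sum:
  fixes A Q :: "real^'n^'n"
  shows "(\<Sum>i=0..(2::nat)-1. (1 / fact (2-1) * real ((2-1) choose i)) *\<^sub>R
                     (transpose (matpow A i) ** Q ** matpow A (2-i-1))) = transpose A ** Q + Q ** A"
  by (simp add: numeral_2_eq_2)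

lemma Sk_zero:
  fixes A Q :: "real^'n^'n"
  assumes N: "transpose A ** Q + Q ** A = 0" and k: "k \<ge> 2"
  shows "(\<Sum>i=0..k-1. (1 / fact (k-1) * real ((k-1) choose i)) *\<^sub>R
                     (transpose (matpow A i) ** Q ** matpow A (k-i-1))) = 0"
proof -
  define m where "m = k - 1"
  have m: "m > 0" using k by (simp add: m_def)
  have QA: "Q ** A = - (transpose A ** Q)" using N by (simp add: eq_neg_iff_add_eq_0 add.commute)
  have "(\<Sum>i=0..k-1. (1 / fact (k-1) * real ((k-1) choose i)) *\<^sub>R
                     (transpose (matpow A i) ** Q ** matpow A (k-i-1)))
     = (\<Sum>i=0..m. (1 / fact m) *\<^sub>R (real (m choose i) *\<^sub>R (transpose (matpow A i) ** Q ** matpow A (m-i))))"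
    unfolding m_def by (rule sum.cong) (auto simp: diff_diff_left add.commute)
  also have "\<dots> = (1 / fact m) *\<^sub>R (\<Sum>i=0..m. real (m choose i) *\<^sub>R (transpose (matpow A i) ** Q ** matpow A (m-i)))"
    by (simp only: scaleR_sum_right)
  also have "\<dots> = 0" by (simp only: T_zero[OF QA m] scaleR_zero_right)
  finally show ?thesis .
qed

theorem proposition3p14:
  fixes Q A :: "real^'n^'n"
  assumes "symmetric_matrix Q" and "positive_definite Q"
  shows "(\<forall>x0 \<in> ellipsoid_boundary Q. \<forall>t\<ge>0. mexp t A *v x0 \<in> ellipsoid_boundary Q)
     \<longleftrightarrow> (\<forall>k\<ge>2. (\<Sum>i=0..k-1. (1 / fact (k-1) * real ((k-1) choose i)) *\<^sub>R
                     (transpose (matpow A i) ** Q ** matpow A (k-i-1))) = 0)"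
proof
  assume H: "\<forall>x0 \<in> ellipsoid_boundary Q. \<forall>t\<ge>0. mexp t A *v x0 \<in> ellipsoid_boundary Q"
  define N where "N = transpose A ** Q + Q ** A"
  have step1: "x0 \<bullet> (N *v x0) = 0" if x0: "x0 \<in> ellipsoid_boundary Q" for x0
  proof -
    define g where "g s = (mexp s A *v x0) \<bullet> (Q *v (mexp s A *v x0))" for s
    have gc: "g s = 1" if "s \<ge> 0" for s
      using H x0 that by (auto simp: g_def ellipsoid_boundary_def)
    have "(g has_real_derivative (mexp 0 A *v x0) \<bullet> (N *v (mexp 0 A *v x0))) (at 0)"
      unfolding g_def N_def by (rule g_deriv)
    then have D: "(g has_real_derivative x0 \<bullet> (N *v x0)) (at 0)" by (simp add: X0)
    then have "((\<lambda>h. (g (0 + h) - g 0) / h) \<longlongrightarrow> x0 \<bullet> (N *v x0)) (at 0)"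
      by (simp add: DERIV_def)
    then have l1: "((\<lambda>h. (g (0 + h) - g 0) / h) \<longlongrightarrow> x0 \<bullet> (N *v x0)) (at_right 0)"
      by (rule tendsto_within_subset) simp
    have "eventually (\<lambda>h. (g (0 + h) - g 0) / h = 0) (at_right (0::real))"
      by (auto simp: eventually_at_right_field gc intro!: exI[of _ 1])
    then have l2: "((\<lambda>h. (g (0 + h) - g 0) / h) \<longlongrightarrow> 0) (at_right 0)"
      by (rule tendsto_eventually)
    show ?thesis using tendsto_unique[OF _ l1 l2] by simp
  qed
  have step2: "x \<bullet> (N *v x) = 0" for x
  proof (cases "x = 0")
    case True then show ?thesis by simp
  next
    case False
    define s where "s = x \<bullet> (Q *v x)"
    have s: "s > 0" using assms(2) False by (simp add: positive_definite_def s_def)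
    define y where "y = (1 / sqrt s) *\<^sub>R x"
    have "y \<bullet> (Q *v y) = (1 / sqrt s)^2 * s"
      by (simp add: y_def s_def matrix_vector_mult_scaleR power2_eq_square)
    also have "\<dots> = 1" using s by (simp add: power_divide)
    finally have "y \<in> ellipsoid_boundary Q" by (simp add: ellipsoid_boundary_def)
    then have "y \<bullet> (N *v y) = 0" by (rule step1)
    then have "(1 / sqrt s)^2 * (x \<bullet> (N *v x)) = 0"
      by (simp add: y_def matrix_vector_mult_scaleR power2_eq_square)
    then show ?thesis using s by simp
  qed
  have symQ: "transpose Q = Q" using assms(1) by (simp add: symmetric_matrix_def)
  have symN: "transpose N = N"
  proof -
    have "transpose N = transpose (transpose A ** Q) + transpose (Q ** A)"
      by (simp add: N_def transpose_def vec_eq_iff)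
    then show ?thesis by (simp add: matrix_transpose_mul symQ N_def add.commute)
  qed
  have step4: "x \<bullet> (N *v y) = 0" for x y
  proof -
    have e: "y \<bullet> (N *v x) = x \<bullet> (N *v y)"
      using dot_transpose[of x N y] symN by (simp add: inner_commute)
    have "(x + y) \<bullet> (N *v (x + y)) = 0" by (rule step2)
    then have "x \<bullet> (N *v x) + x \<bullet> (N *v y) + (y \<bullet> (N *v x) + y \<bullet> (N *v y)) = 0"
      by (simp add: matrix_vector_right_distrib inner_add_left inner_add_right)
    then show ?thesis using e step2[of x] step2[of y] by simp
  qed
  have "N = 0"
  proof (rule matrix_eq[THEN iffD2], intro allI)
    fix y
    have "(N *v y) \<bullet> (N *v y) = 0" by (rule step4)
    then show "N *v y = 0 *v y" by simp
  qed
  then show "\<forall>k\<ge>2. (\<Sum>i=0..k-1. (1 / fact (k-1) * real ((k-1) choose i)) *\<^sub>R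
                     (transpose (matpow A i) ** Q ** matpow A (k-i-1))) = 0"
    using Sk_zero[of A Q] unfolding N_def by blast
next
  assume H: "\<forall>k\<ge>2. (\<Sum>i=0..k-1. (1 / fact (k-1) * real ((k-1) choose i)) *\<^sub>R
                     (transpose (matpow A i) ** Q ** matpow A (k-i-1))) = 0"
  have N: "transpose A ** Q + Q ** A = 0"
    using H[rule_format, of 2] k2_sum[of A Q] by simp
  show "\<forall>x0 \<in> ellipsoid_boundary Q. \<forall>t\<ge>0. mexp t A *v x0 \<in> ellipsoid_boundary Q"
  proof (intro ballI allI impI)
    fix x0 t assume x0: "x0 \<in> ellipsoid_boundary Q" and "(t::real) \<ge> 0"
    define g where "g s = (mexp s A *v x0) \<bullet> (Q *v (mexp s A *v x0))" for s
    have "\<forall>s. (g has_real_derivative 0) (at s)"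
    proof
      fix s
      show "(g has_real_derivative 0) (at s)"
        using g_deriv[of A x0 Q s] unfolding g_def N by simp
    qed
    then have "g t = g 0" by (rule DERIV_isconst_all)
    also have "g 0 = 1" using x0 by (simp add: g_def X0 ellipsoid_boundary_def)
    finally show "mexp t A *v x0 \<in> ellipsoid_boundary Q" by (simp add: g_def ellipsoid_boundary_def)
  qed
qed

end
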